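(* For every computable structure $\mathcal{S}$, the set $CatSpec_{\approx}(\mathcal{S})$ either consists of all Turing degrees or is meager (i.e., the set of all reals $X\subseteq\omega$ whose Turing degree lies in $CatSpec_{\approx}(\mathcal{S})$ is meager in Cantor space $2^{\omega}$).
   Context: Two structures are bi-embeddable ($\approx$) if each embeds isomorphically into the other. A computable structure $\mathcal{S}$ is $\mathbf{d}$-computably bi-embeddably categorical if for every computable $\mathcal{A}\approx\mathcal{S}$ there are $\mathbf{d}$-computable embeddings $\mathcal{A}\hookrightarrow\mathcal{S}$ and $\mathcal{S}\hookrightarrow\mathcal{A}$. $CatSpec_{\approx}(\mathcal{S})$ is the set of all Turing degrees $\mathbf{d}$ for which $\mathcal{S}$ is $\mathbf{d}$-computably bi-embeddably categorical. *)

theory Defs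
  imports Main "HOL-Library.Nat_Bijection"
begin

datatype rf = Zero | Succ | Proj nat | Comp rf "rf list" | Prec rf rf | Mu rf | Oracle

fun hd0 :: "nat list \<Rightarrow> nat" where
  "hd0 [] = 0" | "hd0 (x # _) = x"

inductive eval :: "nat set \<Rightarrow> rf \<Rightarrow> nat list \<Rightarrow> nat \<Rightarrow> bool" for X :: "nat set" where
  ev_zero: "eval X Zero xs 0"
| ev_succ: "eval X Succ xs (Suc (hd0 xs))"
| ev_proj: "eval X (Proj i) xs (if i < length xs then xs ! i else 0)"
| ev_oracle: "eval X Oracle xs (if hd0 xs \<in> X then 1 else 0)"
| ev_comp: "list_all2 (\<lambda>g y. eval X g xs y) gs ys \<Longrightarrow> eval X f ys z \<Longrightarrow> eval X (Comp f gs) xs z"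
| ev_prec0: "eval X f xs y \<Longrightarrow> eval X (Prec f g) (0 # xs) y"
| ev_precS: "eval X (Prec f g) (n # xs) y \<Longrightarrow> eval X g (n # y # xs) z
              \<Longrightarrow> eval X (Prec f g) (Suc n # xs) z"
| ev_mu: "eval X f (n # xs) 0 \<Longrightarrow> (\<forall>m<n. \<exists>y. eval X f (m # xs) (Suc y))
              \<Longrightarrow> eval X (Mu f) xs n"

definition computable_in :: "nat set \<Rightarrow> (nat \<Rightarrow> nat) \<Rightarrow> bool" where
  "computable_in X f \<longleftrightarrow> (\<exists>p. \<forall>n. eval X p [n] (f n))"

definition computable :: "(nat \<Rightarrow> nat) \<Rightarrow> bool" where
  "computable f \<longleftrightarrow> computable_in {} f"

definition chi :: "nat set \<Rightarrow> nat \<Rightarrow> nat" where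
  "chi A n = (if n \<in> A then 1 else 0)"

definition turing_le :: "nat set \<Rightarrow> nat set \<Rightarrow> bool" where
  "turing_le A B \<longleftrightarrow> computable_in B (chi A)"

definition turing_equiv_rel :: "(nat set \<times> nat set) set" where
  "turing_equiv_rel = {(A, B). turing_le A B \<and> turing_le B A}"

definition turing_degrees :: "nat set set set" where
  "turing_degrees = UNIV // turing_equiv_rel"

text \<open>A function is d-computable if it is computable from some (equivalently every) member of d.\<close>
definition deg_computable :: "nat set set \<Rightarrow> (nat \<Rightarrow> nat) \<Rightarrow> bool" where
  "deg_computable d f \<longleftrightarrow> (\<exists>X\<in>d. computable_in X f)"

text \<open>A countable language: relation symbols and function symbols (constants = arity 0)
  indexed by naturals; None means the symbol is not in the language.\<close>
record lang =
  rel_ar :: "nat \<Rightarrow> nat option"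
  fun_ar :: "nat \<Rightarrow> nat option"

record struc =
  sdom :: "nat set"
  srel :: "nat \<Rightarrow> nat list \<Rightarrow> bool"
  sfun :: "nat \<Rightarrow> nat list \<Rightarrow> nat"

definition enc_opt :: "nat option \<Rightarrow> nat" where
  "enc_opt o' = (case o' of None \<Rightarrow> 0 | Some k \<Rightarrow> Suc k)"

definition computable_lang :: "lang \<Rightarrow> bool" where
  "computable_lang L \<longleftrightarrow> computable (\<lambda>i. enc_opt (rel_ar L i)) \<and> computable (\<lambda>i. enc_opt (fun_ar L i))"

definition is_struc :: "lang \<Rightarrow> struc \<Rightarrow> bool" where
  "is_struc L A \<longleftrightarrow> sdom A \<noteq> {} \<and>
     (\<forall>j k xs. fun_ar L j = Some k \<and> length xs = k \<and> set xs \<subseteq> sdom A \<longrightarrow> sfun A j xs \<in> sdom A)"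

definition computable_struc :: "lang \<Rightarrow> struc \<Rightarrow> bool" where
  "computable_struc L A \<longleftrightarrow> is_struc L A \<and> computable (chi (sdom A)) \<and>
     (\<exists>r. computable r \<and> (\<forall>i k xs. rel_ar L i = Some k \<and> length xs = k \<and> set xs \<subseteq> sdom A \<longrightarrow>
          r (prod_encode (i, list_encode xs)) = (if srel A i xs then 1 else 0))) \<and>
     (\<exists>f. computable f \<and> (\<forall>j k xs. fun_ar L j = Some k \<and> length xs = k \<and> set xs \<subseteq> sdom A \<longrightarrow>
          f (prod_encode (j, list_encode xs)) = sfun A j xs))"

definition embedding :: "lang \<Rightarrow> struc \<Rightarrow> struc \<Rightarrow> (nat \<Rightarrow> nat) \<Rightarrow> bool" where
  "embedding L A B h \<longleftrightarrow> h ` sdom A \<subseteq> sdom B \<and> inj_on h (sdom A) \<and>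
     (\<forall>i k xs. rel_ar L i = Some k \<and> length xs = k \<and> set xs \<subseteq> sdom A \<longrightarrow>
          (srel A i xs \<longleftrightarrow> srel B i (map h xs))) \<and>
     (\<forall>j k xs. fun_ar L j = Some k \<and> length xs = k \<and> set xs \<subseteq> sdom A \<longrightarrow>
          h (sfun A j xs) = sfun B j (map h xs))"

definition bi_embeddable :: "lang \<Rightarrow> struc \<Rightarrow> struc \<Rightarrow> bool" where
  "bi_embeddable L A B \<longleftrightarrow> (\<exists>h. embedding L A B h) \<and> (\<exists>g. embedding L B A g)"

definition catspec_be :: "lang \<Rightarrow> struc \<Rightarrow> nat set set set" where
  "catspec_be L S = {d \<in> turing_degrees. \<forall>A. computable_struc L A \<and> bi_embeddable L A S \<longrightarrow>
      (\<exists>h. deg_computable d h \<and> embedding L A S h) \<and> (\<exists>g. deg_computable d g \<and> embedding L S A g)}"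

definition cyl :: "bool list \<Rightarrow> nat set set" where
  "cyl \<sigma> = {X. \<forall>i<length \<sigma>. (i \<in> X) = \<sigma> ! i}"

definition nowhere_dense_cantor :: "nat set set \<Rightarrow> bool" where
  "nowhere_dense_cantor N \<longleftrightarrow> (\<forall>\<sigma>. \<exists>\<tau>. cyl (\<sigma> @ \<tau>) \<inter> N = {})"

definition meager_cantor :: "nat set set \<Rightarrow> bool" where
  "meager_cantor M \<longleftrightarrow> (\<exists>N :: nat \<Rightarrow> nat set set. (\<forall>n. nowhere_dense_cantor (N n)) \<and> M \<subseteq> (\<Union>n. N n))"

end

theory Submission
  imports Defs "HOL-Library.Countable"
begin


instance rf :: countable by countable_datatype

inductive_cases evZ: "eval X Zero xs y"
inductive_cases evS: "eval X Succ xs y"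
inductive_cases evP: "eval X (Proj i) xs y"
inductive_cases evO: "eval X Oracle xs y"
inductive_cases evC: "eval X (Comp f gs) xs y"
inductive_cases evR: "eval X (Prec f g) xs y"
inductive_cases evM: "eval X (Mu f) xs y"



lemma eval_det: "eval X p xs y \<Longrightarrow> eval X p xs y' \<Longrightarrow> y = y'"
proof (induction arbitrary: y' rule: eval.induct)
  case (ev_zero xs) then show ?case by (auto elim: evZ)
next
  case (ev_succ xs) then show ?case by (auto elim: evS)
next
  case (ev_proj i xs) then show ?case by (auto elim: evP)
next
  case (ev_oracle xs) then show ?case by (auto elim: evO)
next
  case (ev_comp xs gs ys f z)
  from ev_comp.prems obtain ys' where a: "list_all2 (\<lambda>g y. eval X g xs y) gs ys'" and b: "eval X f ys' y'"
    by (auto elim: evC)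
  have "ys = ys'" using ev_comp.IH(1) a
  proof (induction gs arbitrary: ys ys')
    case Nil then show ?case by auto
  next
    case (Cons g gs)
    then show ?case by (auto simp: list_all2_Cons1)
  qed
  then show ?case using ev_comp.IH(2) b by auto
next
  case (ev_prec0 f xs y g)
  from ev_prec0.prems have "eval X f xs y'" by (auto elim: evR)
  then show ?case using ev_prec0.IH by auto
next
  case (ev_precS f g n xs y z)
  from ev_precS.prems obtain y2 where "eval X (Prec f g) (n # xs) y2" "eval X g (n # y2 # xs) y'"
    by (auto elim: evR)
  then show ?case using ev_precS.IH by auto
next
  case (ev_mu f n xs)
  from ev_mu.prems obtain n' where c: "n' = y'" "eval X f (n' # xs) 0" "\<forall>m<n'. \<exists>y. eval X f (m # xs) (Suc y)"
    by (auto elim: evM)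
  show ?case
  proof (rule ccontr)
    assume "n \<noteq> y'"
    then have "n < n' \<or> n' < n" using c by auto
    then show False
    proof
      assume "n < n'" then obtain y where "eval X f (n # xs) (Suc y)" using c by auto
      then show False using ev_mu.IH(1) by fastforce
    next
      assume "n' < n" then obtain y where "eval X f (n' # xs) (Suc y)" "\<forall>z. eval X f (n' # xs) z \<longrightarrow> Suc y = z"
        using ev_mu.IH(2) by blast
      then show False using c by auto
    qed
  qed
qed


primrec osub :: "rf \<Rightarrow> rf \<Rightarrow> rf" where
  "osub q Zero = Zero"
| "osub q Succ = Succ"
| "osub q (Proj i) = Proj i"
| "osub q (Comp f gs) = Comp (osub q f) (map (osub q) gs)"
| "osub q (Prec f g) = Prec (osub q f) (osub q g)"
| "osub q (Mu f) = Mu (osub q f)"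
| "osub q Oracle = Comp q [Proj 0]"

lemma eval_osub:
  assumes "eval Y p xs y" and q: "\<forall>n. eval X q [n] (chi Y n)"
  shows "eval X (osub q p) xs y"
  using assms(1)
proof (induction rule: eval.induct)
  case (ev_zero xs) then show ?case by (auto intro: eval.intros)
next
  case (ev_succ xs) then show ?case by (auto intro: eval.intros)
next
  case (ev_proj i xs) then show ?case using eval.ev_proj by simp
next
  case (ev_oracle xs)
  have h: "eval X (Proj 0) xs (hd0 xs)"
    using eval.ev_proj[of X 0 xs] by (cases xs) auto
  have "list_all2 (\<lambda>g y. eval X g xs y) [Proj 0] [hd0 xs]" using h by auto
  moreover have "eval X q [hd0 xs] (if hd0 xs \<in> Y then 1 else 0)" using q chi_def by metis
  ultimately show ?case by (auto intro: eval.ev_comp)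
next
  case (ev_comp xs gs ys f z)
  have "list_all2 (\<lambda>g y. eval X g xs y) (map (osub q) gs) ys"
    using ev_comp.IH(1) by (auto simp: list.rel_map elim: list_all2_mono)
  then show ?case using ev_comp.IH(2) by (auto intro: eval.ev_comp)
next
  case (ev_prec0 f xs y g) then show ?case by (auto intro: eval.intros)
next
  case (ev_precS f g n xs y z) then show ?case by (auto intro: eval.intros)
next
  case (ev_mu f n xs) then show ?case by (auto intro: eval.intros)
qed

lemma computable_in_trans:
  assumes "computable_in Y h" "turing_le Y X" shows "computable_in X h"
  using assms eval_osub unfolding computable_in_def turing_le_def by metis

lemma turing_le_refl: "turing_le A A"
  unfolding turing_le_def computable_in_def chi_def
proof
  show "\<forall>n. eval A Oracle [n] (if n \<in> A then 1 else 0)" using eval.ev_oracle[of A "[_]"] by simp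
qed

lemma turing_le_trans: "turing_le A B \<Longrightarrow> turing_le B C \<Longrightarrow> turing_le A C"
  unfolding turing_le_def using computable_in_trans turing_le_def by blast

lemma turing_le_empty: "turing_le {} X"
  unfolding turing_le_def computable_in_def chi_def using eval.ev_zero by fastforce

lemma computable_rel: "computable h \<Longrightarrow> computable_in X h"
  unfolding computable_def using computable_in_trans turing_le_empty by blast


definition prk :: "nat \<Rightarrow> (nat list \<Rightarrow> nat) \<Rightarrow> bool" where
  "prk k f \<longleftrightarrow> (\<exists>q. \<forall>xs. length xs = k \<longrightarrow> eval {} q xs (f xs))"

lemma prk_cong: "prk k f \<Longrightarrow> (\<And>xs. length xs = k \<Longrightarrow> f xs = g xs) \<Longrightarrow> prk k g"
  unfolding prk_def by metis

lemma prk_zero: "prk k (\<lambda>_. 0)"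
  unfolding prk_def using eval.ev_zero by blast

lemma prk_proj: "i < k \<Longrightarrow> prk k (\<lambda>xs. xs ! i)"
  unfolding prk_def using eval.ev_proj by (metis (full_types))

lemma prk_comp:
  assumes f: "prk m f" and len: "length gl = m" and gs: "\<forall>g\<in>set gl. prk k g"
  shows "prk k (\<lambda>xs. f (map (\<lambda>g. g xs) gl))"
proof -
  obtain qf where qf: "\<forall>xs. length xs = m \<longrightarrow> eval {} qf xs (f xs)" using f prk_def by blast
  from gs have "\<forall>g\<in>set gl. \<exists>q. \<forall>xs. length xs = k \<longrightarrow> eval {} q xs (g xs)" unfolding prk_def .
  then obtain Q where Q: "\<forall>g\<in>set gl. \<forall>xs. length xs = k \<longrightarrow> eval {} (Q g) xs (g xs)" by metis
  have "\<forall>xs. length xs = k \<longrightarrow> eval {} (Comp qf (map Q gl)) xs (f (map (\<lambda>g. g xs) gl))"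
  proof (intro allI impI)
    fix xs :: "nat list" assume "length xs = k"
    then have "list_all2 (\<lambda>g y. eval {} g xs y) (map Q gl) (map (\<lambda>g. g xs) gl)"
      using Q by (auto simp: list.rel_map intro!: list.rel_refl_strong)
    moreover have "eval {} qf (map (\<lambda>g. g xs) gl) (f (map (\<lambda>g. g xs) gl))" using qf len by auto
    ultimately show "eval {} (Comp qf (map Q gl)) xs (f (map (\<lambda>g. g xs) gl))" by (rule eval.ev_comp)
  qed
  then show ?thesis unfolding prk_def by blast
qed

fun prrec :: "(nat list \<Rightarrow> nat) \<Rightarrow> (nat list \<Rightarrow> nat) \<Rightarrow> nat \<Rightarrow> nat list \<Rightarrow> nat" where
  "prrec F G 0 ys = F ys"
| "prrec F G (Suc n) ys = G (n # prrec F G n ys # ys)"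

lemma prk_prec:
  assumes "prk k F" "prk (Suc (Suc k)) G"
  shows "prk (Suc k) (\<lambda>xs. prrec F G (hd xs) (tl xs))"
proof -
  obtain qf where qf: "\<forall>xs. length xs = k \<longrightarrow> eval {} qf xs (F xs)" using assms prk_def by blast
  obtain qg where qg: "\<forall>xs. length xs = Suc (Suc k) \<longrightarrow> eval {} qg xs (G xs)" using assms prk_def by blast
  have "eval {} (Prec qf qg) (n # ys) (prrec F G n ys)" if "length ys = k" for n ys
    using that
  proof (induction n)
    case 0 then show ?case using qf by (auto intro: eval.ev_prec0)
  next
    case (Suc n) then show ?case using qg by (auto intro: eval.ev_precS)
  qed
  then have "\<forall>xs. length xs = Suc k \<longrightarrow> eval {} (Prec qf qg) xs (prrec F G (hd xs) (tl xs))"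
    by (metis Suc_length_conv list.sel(1,3))
  then show ?thesis unfolding prk_def by blast
qed

lemma prk_mu:
  assumes "prk (Suc k) g" "\<forall>xs. length xs = k \<longrightarrow> (\<exists>m. g (m # xs) = 0)"
  shows "prk k (\<lambda>xs. LEAST m. g (m # xs) = 0)"
proof -
  obtain q where q: "\<forall>xs. length xs = Suc k \<longrightarrow> eval {} q xs (g xs)" using assms prk_def by blast
  have "eval {} (Mu q) xs (LEAST m. g (m # xs) = 0)" if len: "length xs = k" for xs
  proof -
    obtain m0 where "g (m0 # xs) = 0" using assms(2) len by blast
    then have l: "g ((LEAST m. g (m # xs) = 0) # xs) = 0" by (rule LeastI)
    have "\<forall>m<(LEAST m. g (m # xs) = 0). \<exists>y. eval {} q (m # xs) (Suc y)"
    proof (intro allI impI)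
      fix m assume "m < (LEAST m. g (m # xs) = 0)"
      then have "g (m # xs) \<noteq> 0" using not_less_Least by blast
      then have "g (m # xs) = Suc (g (m # xs) - 1)" by simp
      then show "\<exists>y. eval {} q (m # xs) (Suc y)" using q len by (metis length_Cons)
    qed
    then show ?thesis using l q len by (metis eval.ev_mu length_Cons)
  qed
  then show ?thesis unfolding prk_def by blast
qed

lemma prk_reindex:
  assumes "prk m f" "\<forall>i<m. idx i < k"
  shows "prk k (\<lambda>xs. f (map (\<lambda>i. xs ! idx i) [0..<m]))"
proof -
  have "prk k (\<lambda>xs. f (map (\<lambda>g. g xs) (map (\<lambda>i xs. xs ! idx i) [0..<m])))"
    using assms by (intro prk_comp) (auto intro: prk_proj)
  then show ?thesis by (simp add: comp_def)
qed

lemma prk_comp1: "prk 1 f \<Longrightarrow> prk k g \<Longrightarrow> prk k (\<lambda>xs. f [g xs])"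
  using prk_comp[of 1 f "[g]" k] by simp

lemma prk_comp2: "prk 2 f \<Longrightarrow> prk k g \<Longrightarrow> prk k h \<Longrightarrow> prk k (\<lambda>xs. f [g xs, h xs])"
  using prk_comp[of 2 f "[g, h]" k] by simp

lemma prk_comp3: "prk 3 f \<Longrightarrow> prk k g \<Longrightarrow> prk k h \<Longrightarrow> prk k l \<Longrightarrow> prk k (\<lambda>xs. f [g xs, h xs, l xs])"
  using prk_comp[of 3 f "[g, h, l]" k] by simp

lemma prk_suc: "prk k f \<Longrightarrow> prk k (\<lambda>xs. Suc (f xs))"
proof -
  have "prk 1 (\<lambda>xs. Suc (xs ! 0))"
    unfolding prk_def
  proof (intro exI allI impI)
    fix xs :: "nat list" assume "length xs = 1"
    then show "eval {} Succ xs (Suc (xs ! 0))" using eval.ev_succ[of "{}" xs] by (cases xs) auto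
  qed
  moreover assume "prk k f"
  ultimately show ?thesis using prk_comp1[of "\<lambda>xs. Suc (xs ! 0)" k f] by simp
qed

lemma prk_const: "prk k (\<lambda>_. c)"
  by (induction c) (auto intro: prk_zero prk_suc)

lemma prk_if0_base: "prk 3 (\<lambda>xs. if xs ! 0 = 0 then xs ! 1 else xs ! 2)"
proof -
  have "prk (Suc 2) (\<lambda>xs. prrec (\<lambda>ys. ys ! 0) (\<lambda>ys. ys ! 3) (hd xs) (tl xs))"
    by (rule prk_prec) (auto intro: prk_proj)
  then have "prk 3 (\<lambda>xs. prrec (\<lambda>ys. ys ! 0) (\<lambda>ys. ys ! 3) (hd xs) (tl xs))" by simp
  then show ?thesis
  proof (rule prk_cong)
    fix xs :: "nat list" assume "length xs = 3"
    then obtain a b c where xs: "xs = [a, b, c]" by (auto simp: numeral_eq_Suc length_Suc_conv)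
    show "prrec (\<lambda>ys. ys ! 0) (\<lambda>ys. ys ! 3) (hd xs) (tl xs) = (if xs ! 0 = 0 then xs ! 1 else xs ! 2)"
      using xs by (cases a) auto
  qed
qed

lemma prk_if0: "prk k t \<Longrightarrow> prk k a \<Longrightarrow> prk k b \<Longrightarrow> prk k (\<lambda>xs. if t xs = 0 then a xs else b xs)"
  proof -
  assume h: "prk k t" "prk k a" "prk k b"
  have "prk k (\<lambda>xs. (\<lambda>ys. if ys ! 0 = 0 then ys ! 1 else ys ! 2) [t xs, a xs, b xs])"
    by (rule prk_comp3[OF prk_if0_base]) (fact h)+
  then show ?thesis by (rule prk_cong) simp
qed

lemma prk_pred: "prk k a \<Longrightarrow> prk k (\<lambda>xs. a xs - 1)"
proof -
  have "prk (Suc 0) (\<lambda>xs. prrec (\<lambda>ys. 0) (\<lambda>ys. ys ! 0) (hd xs) (tl xs))"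
    by (rule prk_prec) (auto intro: prk_proj prk_zero)
  then have "prk (Suc 0) (\<lambda>xs. xs ! 0 - 1)"
  proof (rule prk_cong)
    fix xs :: "nat list" assume "length xs = Suc 0"
    then obtain a where xs: "xs = [a]" by (auto simp: length_Suc_conv)
    show "prrec (\<lambda>ys. 0) (\<lambda>ys. ys ! 0) (hd xs) (tl xs) = xs ! 0 - 1" using xs by (cases a) auto
  qed
  then have "prk 1 (\<lambda>xs. xs ! 0 - 1)" by simp
  moreover assume "prk k a"
  ultimately show ?thesis using prk_comp1[of "\<lambda>xs. xs ! 0 - 1"] by simp
qed

lemma prk_sub: "prk k a \<Longrightarrow> prk k b \<Longrightarrow> prk k (\<lambda>xs. a xs - b xs)"
proof -
  have "prk (Suc 1) (\<lambda>xs. prrec (\<lambda>ys. ys ! 0) (\<lambda>ys. ys ! 1 - 1) (hd xs) (tl xs))"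
    by (rule prk_prec) (rule prk_proj, simp, rule prk_pred, rule prk_proj, simp)
  then have "prk 2 (\<lambda>xs. prrec (\<lambda>ys. ys ! 0) (\<lambda>ys. ys ! 1 - 1) (hd xs) (tl xs))" by (simp add: eval_nat_numeral)
  then have "prk 2 (\<lambda>xs. xs ! 1 - xs ! 0)"
  proof (rule prk_cong)
    fix xs :: "nat list" assume "length xs = 2"
    then obtain a b where xs: "xs = [a, b]" by (auto simp: numeral_eq_Suc length_Suc_conv)
    have "prrec (\<lambda>ys. ys ! 0) (\<lambda>ys. ys ! 1 - 1) a [b] = b - a" by (induction a) auto
    then show "prrec (\<lambda>ys. ys ! 0) (\<lambda>ys. ys ! 1 - 1) (hd xs) (tl xs) = xs ! 1 - xs ! 0" using xs by simp
  qed
  moreover assume "prk k a" "prk k b"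
  ultimately show ?thesis using prk_comp2[of "\<lambda>xs. xs ! 1 - xs ! 0" k b a] by simp
qed

lemma prk_ifeq: "prk k a \<Longrightarrow> prk k b \<Longrightarrow> prk k c \<Longrightarrow> prk k d \<Longrightarrow>
    prk k (\<lambda>xs. if a xs = b xs then c xs else d xs)"
proof -
  assume h: "prk k a" "prk k b" "prk k c" "prk k d"
  have "prk k (\<lambda>xs. if a xs - b xs = 0 then (if b xs - a xs = 0 then c xs else d xs) else d xs)"
    using h by (intro prk_if0 prk_sub) auto
  then show ?thesis by (rule prk_cong) auto
qed

lemma prk_case_list: "prk k t \<Longrightarrow> (\<forall>g\<in>set gl. prk k g) \<Longrightarrow> prk k r \<Longrightarrow>
   prk k (\<lambda>xs. if 0 \<in> set (map (\<lambda>g. g xs) gl) then 0 else r xs)"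
proof (induction gl)
  case Nil then show ?case by simp
next
  case (Cons g gl)
  then have "prk k (\<lambda>xs. if g xs = 0 then 0 else (if 0 \<in> set (map (\<lambda>g. g xs) gl) then 0 else r xs))"
    by (intro prk_if0) (auto intro: prk_zero)
  then show ?case by (rule prk_cong) auto
qed


definition dig :: "nat \<Rightarrow> nat \<Rightarrow> nat" where "dig c i = c div 3 ^ i mod 3"

fun pit :: "(nat \<Rightarrow> nat \<Rightarrow> nat) \<Rightarrow> nat \<Rightarrow> nat \<Rightarrow> nat" where
  "pit G a 0 = a"
| "pit G a (Suc j) = (case pit G a j of 0 \<Rightarrow> 0 | Suc y \<Rightarrow> G j y)"

fun bs :: "(nat \<Rightarrow> nat) \<Rightarrow> nat \<Rightarrow> nat" where
  "bs F 0 = 0"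
| "bs F (Suc b) = (if bs F b = 0 then (if F b = 0 then 1 else if F b = 1 then Suc (Suc b) else 0) else bs F b)"

primrec ce :: "rf \<Rightarrow> nat \<Rightarrow> nat \<Rightarrow> nat list \<Rightarrow> nat" where
  "ce Zero s c xs = Suc 0"
| "ce Succ s c xs = Suc (Suc (hd0 xs))"
| "ce (Proj i) s c xs = Suc (if i < length xs then xs ! i else 0)"
| "ce Oracle s c xs = (if dig c (hd0 xs) = 0 then 0 else Suc (if dig c (hd0 xs) = 2 then 1 else 0))"
| "ce (Comp f gs) s c xs = (if 0 \<in> set (map (\<lambda>g. ce g s c xs) gs) then 0
      else ce f s c (map (\<lambda>g. ce g s c xs - 1) gs))"
| "ce (Prec f g) s c xs = (case xs of [] \<Rightarrow> 0 | n # ys \<Rightarrow> pit (\<lambda>j y. ce g s c (j # y # ys)) (ce f s c ys) n)"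
| "ce (Mu f) s c xs = (if bs (\<lambda>m. ce f s c (m # xs)) s < 2 then 0 else bs (\<lambda>m. ce f s c (m # xs)) s - 1)"

definition agrees :: "nat set \<Rightarrow> nat \<Rightarrow> bool" where
  "agrees X c \<longleftrightarrow> (\<forall>i. dig c i \<noteq> 0 \<longrightarrow> (i \<in> X \<longleftrightarrow> dig c i = 2))"

definition pre :: "nat set \<Rightarrow> nat \<Rightarrow> nat \<Rightarrow> bool" where
  "pre X c L \<longleftrightarrow> (\<forall>i<L. dig c i = (if i \<in> X then 2 else 1))"

lemma bs_found: "bs F b = Suc (Suc m) \<Longrightarrow> m < b \<and> F m = 1 \<and> (\<forall>j<m. F j \<ge> 2)"
proof (induction b)
  case 0 then show ?case by simp
next
  case (Suc b)
  show ?case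
  proof (cases "bs F b = 0")
    case True
    have step: "bs F (Suc j) \<noteq> 0" if "F j < 2" for j
      using that by (cases "bs F j = 0") auto
    have nz: "bs F b' \<noteq> 0" if "j < b'" "F j < 2" for j b'
      using that
    proof (induction b')
      case 0 then show ?case by simp
    next
      case (Suc b')
      show ?case
      proof (cases "j < b'")
        case True then show ?thesis using Suc by simp
      next
        case False then have "j = b'" using Suc by simp
        then show ?thesis using step Suc by auto
      qed
    qed
    have z: "\<forall>j<b. F j \<ge> 2"
      using nz True by (meson not_le)
    then show ?thesis using Suc.prems True by (auto split: if_splits)
  next
    case False
    then show ?thesis using Suc by auto
  qed
qed

lemma bs_below: "\<forall>j<m. F j \<ge> 2 \<Longrightarrow> b \<le> m \<Longrightarrow> bs F b = 0"
proof (induction b)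
  case 0 then show ?case by simp
next
  case (Suc b)
  then have "F b \<ge> 2" by auto
  moreover have "bs F b = 0" using Suc by auto
  ultimately show ?case by simp
qed

lemma bs_hit: "\<forall>j<m. F j \<ge> 2 \<Longrightarrow> F m = 1 \<Longrightarrow> m < b \<Longrightarrow> bs F b = Suc (Suc m)"
proof (induction b)
  case 0 then show ?case by simp
next
  case (Suc b)
  show ?case
  proof (cases "m < b")
    case True then show ?thesis using Suc by auto
  next
    case False then have "m = b" using Suc by simp
    then show ?thesis using Suc bs_below[of m F b] by auto
  qed
qed

lemma ce_sound: "ce p s c xs = Suc y \<Longrightarrow> agrees X c \<Longrightarrow> eval X p xs y"
proof (induction p arbitrary: xs y)
  case Zero then show ?case using eval.ev_zero by simp
next
  case Succ then have "y = Suc (hd0 xs)" by simp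
  then show ?case using eval.ev_succ by simp
next
  case (Proj i) then have "y = (if i < length xs then xs ! i else 0)" by simp
  then show ?case using eval.ev_proj by simp
next
  case Oracle
  then have "dig c (hd0 xs) \<noteq> 0" and y: "y = (if dig c (hd0 xs) = 2 then 1 else 0)" by (auto split: if_splits)
  then have "y = (if hd0 xs \<in> X then 1 else 0)" using Oracle.prems(2) unfolding agrees_def by auto
  then show ?case using eval.ev_oracle by simp
next
  case (Comp f gs)
  from Comp.prems have nz: "\<forall>g\<in>set gs. ce g s c xs \<noteq> 0" by (auto split: if_splits)
  have "list_all2 (\<lambda>g y. eval X g xs y) gs (map (\<lambda>g. ce g s c xs - 1) gs)"
    unfolding list.rel_map
  proof (rule list.rel_refl_strong)
    fix g assume g: "g \<in> set gs"
    then have "ce g s c xs = Suc (ce g s c xs - 1)" using nz by auto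
    then show "eval X g xs (ce g s c xs - 1)" using Comp.IH(2)[OF g] Comp.prems(2) by blast
  qed
  moreover have "0 \<notin> set (map (\<lambda>g. ce g s c xs) gs)" using nz by auto
  then have "ce f s c (map (\<lambda>g. ce g s c xs - 1) gs) = Suc y" using Comp.prems(1) by simp
  then have "eval X f (map (\<lambda>g. ce g s c xs - 1) gs) y" using Comp.IH(1) Comp.prems(2) by blast
  ultimately show ?case by (rule eval.ev_comp)
next
  case (Prec f g)
  then obtain n ys where xs: "xs = n # ys" by (cases xs) auto
  have "pit (\<lambda>j y. ce g s c (j # y # ys)) (ce f s c ys) n = Suc y \<Longrightarrow> eval X (Prec f g) (n # ys) y" for y
  proof (induction n arbitrary: y)
    case 0 then show ?case using Prec.IH(1) Prec.prems(2) by (auto intro: eval.ev_prec0)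
  next
    case (Suc n)
    then obtain y1 where y1: "pit (\<lambda>j y. ce g s c (j # y # ys)) (ce f s c ys) n = Suc y1"
      by (auto split: nat.splits)
    then have "ce g s c (n # y1 # ys) = Suc y" using Suc.prems by simp
    then show ?case using Suc.IH[OF y1] Prec.IH(2) Prec.prems(2) by (auto intro: eval.ev_precS)
  qed
  then show ?case using Prec.prems xs by simp
next
  case (Mu f)
  let ?F = "\<lambda>m. ce f s c (m # xs)"
  from Mu.prems have r: "bs ?F s = Suc (Suc y)" by (auto split: if_splits)
  from bs_found[OF r] have a: "?F y = 1" "\<forall>j<y. ?F j \<ge> 2" by auto
  have "eval X f (y # xs) 0" using a(1) Mu.IH Mu.prems(2) by simp
  moreover have "\<forall>m<y. \<exists>z. eval X f (m # xs) (Suc z)"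
  proof (intro allI impI)
    fix m assume "m < y"
    then have "?F m = Suc (Suc (?F m - 2))" using a(2) by auto
    then show "\<exists>z. eval X f (m # xs) (Suc z)" using Mu.IH Mu.prems(2) by blast
  qed
  ultimately show ?case by (rule eval.ev_mu)
qed

lemma fin_bounds:
  fixes n :: nat and P :: "nat \<Rightarrow> nat \<Rightarrow> nat \<Rightarrow> bool"
  assumes "\<forall>m<n. \<exists>a b. P m a b" "\<And>m a b a' b'. P m a b \<Longrightarrow> a \<le> a' \<Longrightarrow> b \<le> b' \<Longrightarrow> P m a' b'"
  shows "\<exists>a b. \<forall>m<n. P m a b"
  using assms(1)
proof (induction n)
  case 0 then show ?case by simp
next
  case (Suc n)
  then obtain a b where ab: "\<forall>m<n. P m a b" by auto
  obtain a1 b1 where "P n a1 b1" using Suc.prems by auto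
  then have "\<forall>m<Suc n. P m (max a a1) (max b b1)"
    using ab assms(2) by (metis less_Suc_eq max.cobounded1 max.cobounded2)
  then show ?case by blast
qed

lemma pre_mono: "pre X c L \<Longrightarrow> L' \<le> L \<Longrightarrow> pre X c L'"
  unfolding pre_def by auto

definition good :: "nat set \<Rightarrow> rf \<Rightarrow> nat list \<Rightarrow> nat \<Rightarrow> nat \<Rightarrow> nat \<Rightarrow> bool" where
  "good X p xs y s0 L \<longleftrightarrow> (\<forall>s c. s0 \<le> s \<longrightarrow> pre X c L \<longrightarrow> ce p s c xs = Suc y)"

lemma good_mono: "good X p xs y a b \<Longrightarrow> a \<le> a' \<Longrightarrow> b \<le> b' \<Longrightarrow> good X p xs y a' b'"
  unfolding good_def using pre_mono by (meson order_trans)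

lemma ce_complete: "eval X p xs y \<Longrightarrow> \<exists>s0 L. good X p xs y s0 L"
proof (induction rule: eval.induct)
  case (ev_zero xs) then show ?case by (auto simp: good_def)
next
  case (ev_succ xs) then show ?case by (auto simp: good_def)
next
  case (ev_proj i xs) then show ?case by (auto simp: good_def)
next
  case (ev_oracle xs)
  have "good X Oracle xs (if hd0 xs \<in> X then 1 else 0) 0 (Suc (hd0 xs))"
    unfolding good_def pre_def by auto
  then show ?case by blast
next
  case (ev_comp xs gs ys f z)
  have "\<exists>s0 L. \<forall>s c. s0 \<le> s \<longrightarrow> pre X c L \<longrightarrow> map (\<lambda>g. ce g s c xs) gs = map Suc ys"
    using ev_comp.IH(1)
  proof (induction rule: list_all2_induct)
    case Nil then show ?case by simp
  next
    case (Cons g gs y ys)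
    then obtain a b where "\<forall>s c. a \<le> s \<longrightarrow> pre X c b \<longrightarrow> map (\<lambda>g. ce g s c xs) gs = map Suc ys" by auto
    moreover obtain a1 b1 where "good X g xs y a1 b1" using Cons by auto
    ultimately have "\<forall>s c. max a a1 \<le> s \<longrightarrow> pre X c (max b b1) \<longrightarrow> map (\<lambda>g. ce g s c xs) (g # gs) = map Suc (y # ys)"
      unfolding good_def using pre_mono by (metis list.simps(9) max.bounded_iff max.cobounded1 max.cobounded2)
    then show ?case by blast
  qed
  then obtain a b where ab: "\<forall>s c. a \<le> s \<longrightarrow> pre X c b \<longrightarrow> map (\<lambda>g. ce g s c xs) gs = map Suc ys" by auto
  obtain a1 b1 where f: "good X f ys z a1 b1" using ev_comp.IH(2) by auto
  have "good X (Comp f gs) xs z (max a a1) (max b b1)"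
    unfolding good_def
  proof (intro allI impI)
    fix s c assume s: "max a a1 \<le> s" and c: "pre X c (max b b1)"
    then have m: "map (\<lambda>g. ce g s c xs) gs = map Suc ys" using ab pre_mono by auto
    have "map (\<lambda>g. ce g s c xs - 1) gs = map (\<lambda>x. x - 1) (map (\<lambda>g. ce g s c xs) gs)" by simp
    also have "\<dots> = ys" unfolding m by (simp add: comp_def)
    finally have "map (\<lambda>g. ce g s c xs - 1) gs = ys" .
    moreover have "0 \<notin> set (map (\<lambda>g. ce g s c xs) gs)" using m by auto
    ultimately show "ce (Comp f gs) s c xs = Suc z" using f s c pre_mono unfolding good_def by auto
  qed
  then show ?case by blast
next
  case (ev_prec0 f xs y g)
  then obtain a b where "good X f xs y a b" by auto
  then have "good X (Prec f g) (0 # xs) y a b" unfolding good_def by auto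
  then show ?case by blast
next
  case (ev_precS f g n xs y z)
  then obtain a b a1 b1 where 1: "good X (Prec f g) (n # xs) y a b" and 2: "good X g (n # y # xs) z a1 b1" by auto
  have "good X (Prec f g) (Suc n # xs) z (max a a1) (max b b1)"
    unfolding good_def
  proof (intro allI impI)
    fix s c assume s: "max a a1 \<le> s" and c: "pre X c (max b b1)"
    then have "ce (Prec f g) s c (n # xs) = Suc y" using 1 pre_mono unfolding good_def by auto
    moreover have "ce g s c (n # y # xs) = Suc z" using 2 s c pre_mono unfolding good_def by auto
    ultimately show "ce (Prec f g) s c (Suc n # xs) = Suc z" by simp
  qed
  then show ?case by blast
next
  case (ev_mu f n xs)
  obtain a b where 1: "good X f (n # xs) 0 a b" using ev_mu.IH(1) by auto
  have "\<forall>m<n. \<exists>a b. \<exists>y. good X f (m # xs) (Suc y) a b" using ev_mu.IH(2) by blast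
  then obtain a1 b1 where 2: "\<forall>m<n. \<exists>y. good X f (m # xs) (Suc y) a1 b1"
    using fin_bounds[where P = "\<lambda>m a b. \<exists>y. good X f (m # xs) (Suc y) a b" and n = n] good_mono by metis
  have "good X (Mu f) xs n (max (Suc n) (max a a1)) (max b b1)"
    unfolding good_def
  proof (intro allI impI)
    fix s c assume s: "max (Suc n) (max a a1) \<le> s" and c: "pre X c (max b b1)"
    let ?F = "\<lambda>m. ce f s c (m # xs)"
    have "?F n = 1" using 1 s c pre_mono unfolding good_def by auto
    moreover have "\<forall>j<n. ?F j \<ge> 2"
    proof (intro allI impI)
      fix j assume "j < n"
      then obtain y where "good X f (j # xs) (Suc y) a1 b1" using 2 by auto
      then have "?F j = Suc (Suc y)" using s c pre_mono unfolding good_def by auto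
      then show "?F j \<ge> 2" by simp
    qed
    ultimately have "bs ?F s = Suc (Suc n)" using bs_hit s by auto
    then show "ce (Mu f) s c xs = Suc n" by simp
  qed
  then show ?case by blast
qed


lemma prk_mod3: "prk k a \<Longrightarrow> prk k (\<lambda>xs. a xs mod 3)"
proof -
  have "prk (Suc 0) (\<lambda>xs. prrec (\<lambda>_. 0) (\<lambda>ys. if ys ! 1 = 2 then 0 else Suc (ys ! 1)) (hd xs) (tl xs))"
    by (rule prk_prec) (auto intro!: prk_ifeq prk_proj prk_const prk_suc)
  then have "prk (Suc 0) (\<lambda>xs. xs ! 0 mod 3)"
  proof (rule prk_cong)
    fix xs :: "nat list" assume "length xs = Suc 0"
    then obtain n where xs: "xs = [n]" by (auto simp: length_Suc_conv)
    have "prrec (\<lambda>_. 0) (\<lambda>ys. if ys ! 1 = 2 then 0 else Suc (ys ! 1)) n [] = n mod 3"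
      by (induction n) (auto simp: mod_Suc)
    then show "prrec (\<lambda>_. 0) (\<lambda>ys. if ys ! 1 = 2 then 0 else Suc (ys ! 1)) (hd xs) (tl xs) = xs ! 0 mod 3"
      using xs by simp
  qed
  moreover assume "prk k a"
  ultimately show ?thesis using prk_comp1[of "\<lambda>xs. xs ! 0 mod 3" k a] by simp
qed

lemma prk_div3: "prk k a \<Longrightarrow> prk k (\<lambda>xs. a xs div 3)"
proof -
  have "prk (Suc 0) (\<lambda>xs. prrec (\<lambda>_. 0) (\<lambda>ys. if ys ! 0 mod 3 = 2 then Suc (ys ! 1) else ys ! 1) (hd xs) (tl xs))"
    by (rule prk_prec) (auto intro!: prk_ifeq prk_proj prk_const prk_suc prk_mod3)
  then have "prk (Suc 0) (\<lambda>xs. xs ! 0 div 3)"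
  proof (rule prk_cong)
    fix xs :: "nat list" assume "length xs = Suc 0"
    then obtain n where xs: "xs = [n]" by (auto simp: length_Suc_conv)
    have "prrec (\<lambda>_. 0) (\<lambda>ys. if ys ! 0 mod 3 = 2 then Suc (ys ! 1) else ys ! 1) n [] = n div 3"
      by (induction n) (auto simp: div_Suc mod_Suc)
    then show "prrec (\<lambda>_. 0) (\<lambda>ys. if ys ! 0 mod 3 = 2 then Suc (ys ! 1) else ys ! 1) (hd xs) (tl xs) = xs ! 0 div 3"
      using xs by simp
  qed
  moreover assume "prk k a"
  ultimately show ?thesis using prk_comp1[of "\<lambda>xs. xs ! 0 div 3" k a] by simp
qed

lemma prk_dig: "prk k a \<Longrightarrow> prk k b \<Longrightarrow> prk k (\<lambda>xs. dig (a xs) (b xs))"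
proof -
  have "prk (Suc 1) (\<lambda>xs. prrec (\<lambda>ys. ys ! 0) (\<lambda>ys. ys ! 1 div 3) (hd xs) (tl xs))"
    by (rule prk_prec) (auto intro!: prk_proj prk_div3)
  then have "prk (Suc 1) (\<lambda>xs. xs ! 1 div 3 ^ (xs ! 0))"
  proof (rule prk_cong)
    fix xs :: "nat list" assume "length xs = Suc 1"
    then obtain i c where xs: "xs = [i, c]" by (auto simp: length_Suc_conv)
    have "prrec (\<lambda>ys. ys ! 0) (\<lambda>ys. ys ! 1 div 3) i [c] = c div 3 ^ i"
    proof (induction i)
      case 0 then show ?case by simp
    next
      case (Suc i)
      have "c div 3 ^ Suc i = c div 3 ^ i div 3" by (simp only: power_Suc2 div_mult2_eq)
      then show ?case using Suc by simp
    qed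
    then show "prrec (\<lambda>ys. ys ! 0) (\<lambda>ys. ys ! 1 div 3) (hd xs) (tl xs) = xs ! 1 div 3 ^ (xs ! 0)"
      using xs by simp
  qed
  then have "prk 2 (\<lambda>xs. xs ! 1 div 3 ^ (xs ! 0))" by (simp add: numeral_2_eq_2)
  then have "prk 2 (\<lambda>xs. dig (xs ! 1) (xs ! 0))"
    unfolding dig_def by (rule prk_mod3)
  moreover assume "prk k a" "prk k b"
  ultimately show ?thesis using prk_comp2[of "\<lambda>xs. dig (xs ! 1) (xs ! 0)" k b a] by simp
qed

lemma map_nth_drop: "map (\<lambda>i. zs ! i) [a..<length zs] = drop a zs"
  by (rule nth_equalityI) auto

lemma prk_hd0D: "prk (Suc (Suc k)) (\<lambda>xs. hd0 (drop 2 xs))"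
proof (cases k)
  case 0
  show ?thesis by (rule prk_cong[OF prk_const[of _ 0]]) (auto simp: 0 drop_eq_Nil2[THEN iffD2])
next
  case (Suc k')
  show ?thesis
  proof (rule prk_cong[OF prk_proj[of 2]])
    show "2 < Suc (Suc k)" using Suc by simp
  next
    fix xs :: "nat list" assume "length xs = Suc (Suc k)"
    then obtain a b c ys where "xs = a # b # c # ys" using Suc by (auto simp: length_Suc_conv)
    then show "xs ! 2 = hd0 (drop 2 xs)" by (simp add: numeral_2_eq_2)
  qed
qed


lemma map_idx_Prec:
  assumes "length xs = Suc (Suc (Suc k))"
  shows "map (\<lambda>i. xs ! (if i = 0 then 2 else if i = 1 then 0 else if i = 2 then 1 else i)) [0..<Suc (Suc (Suc k))]
     = xs ! 2 # xs ! 0 # xs ! 1 # drop 3 xs"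
proof -
  have "[0..<Suc (Suc (Suc k))] = 0 # 1 # 2 # [3..<length xs]" using assms by (simp add: upt_conv_Cons numeral_3_eq_3 del: upt_Suc)
  moreover have "map (\<lambda>i. xs ! i) [3..<length xs] = drop 3 xs" by (rule map_nth_drop)
  moreover have "map (\<lambda>i. xs ! (if i = 0 then 2 else if i = 1 then 0 else if i = 2 then 1 else i)) [3..<length xs]
      = map (\<lambda>i. xs ! i) [3..<length xs]" by (rule map_cong) auto
  ultimately show ?thesis by simp
qed

lemma map_idx_Mu:
  assumes "length xs = Suc (Suc k)"
  shows "map (\<lambda>i. xs ! (if i = 0 then 0 else i - 1)) [0..<Suc (Suc (Suc k))] = xs ! 0 # xs"
proof (rule nth_equalityI)
  show "length (map (\<lambda>i. xs ! (if i = 0 then 0 else i - 1)) [0..<Suc (Suc (Suc k))]) = length (xs ! 0 # xs)"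
    using assms by simp
next
  fix i assume "i < length (map (\<lambda>i. xs ! (if i = 0 then 0 else i - 1)) [0..<Suc (Suc (Suc k))])"
  then have "i < Suc (Suc (Suc k))" by simp
  then show "map (\<lambda>i. xs ! (if i = 0 then 0 else i - 1)) [0..<Suc (Suc (Suc k))] ! i = (xs ! 0 # xs) ! i"
    by (cases i) (auto simp del: upt_Suc)
qed

lemma pit_prrec:
  "prrec (\<lambda>ps. ce f (ps ! 0) (ps ! 1) (drop 2 ps))
     (\<lambda>qs. if qs ! 1 = 0 then 0 else ce g (qs ! 2) (qs ! 3) (qs ! 0 # (qs ! 1 - 1) # drop 4 qs)) n (s # c # ys)
   = pit (\<lambda>j y. ce g s c (j # y # ys)) (ce f s c ys) n"
proof (induction n)
  case 0 then show ?case by simp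
next
  case (Suc n)
  then show ?case by (cases "pit (\<lambda>j y. ce g s c (j # y # ys)) (ce f s c ys) n") (auto simp: numeral_eq_Suc)
qed

lemma bs_prrec:
  "prrec (\<lambda>ps. 0)
     (\<lambda>qs. if qs ! 1 = 0 then (if ce f (qs ! 2) (qs ! 3) (qs ! 0 # drop 4 qs) = 0 then 1
            else if ce f (qs ! 2) (qs ! 3) (qs ! 0 # drop 4 qs) = 1 then Suc (Suc (qs ! 0)) else 0) else qs ! 1) b (s # c # D)
   = bs (\<lambda>m. ce f s c (m # D)) b"
  by (induction b) (auto simp: numeral_eq_Suc)

lemma ce_prk: "prk (Suc (Suc k)) (\<lambda>xs. ce p (xs ! 0) (xs ! 1) (drop 2 xs))"
proof (induction p arbitrary: k)
  case Zero
  show ?case by (rule prk_cong[OF prk_const[of _ 1]]) simp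
next
  case Succ
  show ?case by (rule prk_cong[OF prk_suc[OF prk_suc[OF prk_hd0D]]]) simp
next
  case (Proj i)
  show ?case
  proof (cases "i < k")
    case True
    show ?thesis
    proof (rule prk_cong[OF prk_suc[OF prk_proj[of "i + 2"]]])
      show "i + 2 < Suc (Suc k)" using True by simp
    next
      fix xs :: "nat list" assume "length xs = Suc (Suc k)"
      then show "Suc (xs ! (i + 2)) = ce (Proj i) (xs ! 0) (xs ! 1) (drop 2 xs)" using True
        by (simp add: add.commute)
    qed
  next
    case False
    show ?thesis by (rule prk_cong[OF prk_const[of _ 1]]) (use False in simp)
  qed
next
  case Oracle
  have hD: "prk (Suc (Suc k)) (\<lambda>xs. dig (xs ! 1) (hd0 (drop 2 xs)))"
    by (rule prk_dig[OF prk_proj prk_hd0D]) simp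
  have "prk (Suc (Suc k)) (\<lambda>xs. if dig (xs ! 1) (hd0 (drop 2 xs)) = 0 then 0
          else Suc (if dig (xs ! 1) (hd0 (drop 2 xs)) = 2 then 1 else 0))"
    by (rule prk_if0[OF hD prk_zero prk_suc[OF prk_ifeq[OF hD prk_const prk_const prk_const]]])
  then show ?case by (rule prk_cong) simp
next
  case (Comp f gs)
  let ?gl = "[\<lambda>xs. xs ! 0, \<lambda>xs. xs ! 1] @ map (\<lambda>g xs. ce g (xs ! 0) (xs ! 1) (drop 2 xs) - 1) gs"
  have cg: "\<And>g. g \<in> set gs \<Longrightarrow> prk (Suc (Suc k)) (\<lambda>xs. ce g (xs ! 0) (xs ! 1) (drop 2 xs) - 1)"
    using prk_pred[OF Comp.IH(2)] by blast
  have gl_ok: "\<forall>gg\<in>set ?gl. prk (Suc (Suc k)) gg"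
  proof
    fix gg assume "gg \<in> set ?gl"
    then consider "gg = (\<lambda>xs. xs ! 0)" | "gg = (\<lambda>xs. xs ! 1)"
      | g where "g \<in> set gs" "gg = (\<lambda>xs. ce g (xs ! 0) (xs ! 1) (drop 2 xs) - 1)" by auto
    then show "prk (Suc (Suc k)) gg"
    proof cases
      case 1 then show ?thesis using prk_proj[of 0 "Suc (Suc k)"] by simp
    next
      case 2 then show ?thesis using prk_proj[of 1 "Suc (Suc k)"] by simp
    next
      case 3 then show ?thesis using cg by simp
    qed
  qed
  have h1: "prk (Suc (Suc k)) (\<lambda>xs. (\<lambda>zs. ce f (zs ! 0) (zs ! 1) (drop 2 zs)) (map (\<lambda>g. g xs) ?gl))"
    by (rule prk_comp[OF Comp.IH(1)[of "length gs"] _ gl_ok]) simp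
  have h2: "prk (Suc (Suc k)) (\<lambda>xs. if 0 \<in> set (map (\<lambda>g'. g' xs) (map (\<lambda>g xs. ce g (xs ! 0) (xs ! 1) (drop 2 xs)) gs))
      then 0 else (\<lambda>zs. ce f (zs ! 0) (zs ! 1) (drop 2 zs)) (map (\<lambda>g. g xs) ?gl))"
  proof (rule prk_case_list[OF prk_zero _ h1])
    show "\<forall>gg\<in>set (map (\<lambda>g xs. ce g (xs ! 0) (xs ! 1) (drop 2 xs)) gs). prk (Suc (Suc k)) gg"
    proof
      fix gg assume "gg \<in> set (map (\<lambda>g xs. ce g (xs ! 0) (xs ! 1) (drop 2 xs)) gs)"
      then obtain g where "g \<in> set gs" "gg = (\<lambda>xs. ce g (xs ! 0) (xs ! 1) (drop 2 xs))" by auto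
      then show "prk (Suc (Suc k)) gg" using Comp.IH(2) by simp
    qed
  qed
  show ?case
  proof (rule prk_cong[OF h2])
    fix xs :: "nat list"
    show "(if 0 \<in> set (map (\<lambda>g'. g' xs) (map (\<lambda>g xs. ce g (xs ! 0) (xs ! 1) (drop 2 xs)) gs))
      then 0 else (\<lambda>zs. ce f (zs ! 0) (zs ! 1) (drop 2 zs)) (map (\<lambda>g. g xs) ?gl)) =
      ce (Comp f gs) (xs ! 0) (xs ! 1) (drop 2 xs)"
      by (simp add: comp_def)
  qed
next
  case (Prec f g)
  show ?case
  proof (cases k)
    case 0
    show ?thesis by (rule prk_cong[OF prk_zero]) (simp add: 0)
  next
    case (Suc k')
    define F where "F = (\<lambda>ps. ce f (ps ! 0) (ps ! 1) (drop 2 ps))"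
    define G where "G = (\<lambda>qs. if qs ! 1 = 0 then 0 else ce g (qs ! 2) (qs ! 3) (qs ! 0 # (qs ! 1 - 1) # drop 4 qs))"
    have hF: "prk (Suc (Suc k')) F" unfolding F_def by (rule Prec.IH(1))
    let ?gl = "[\<lambda>q. q ! 2, \<lambda>q. q ! 3, \<lambda>q. q ! 0, \<lambda>q. q ! 1 - 1] @ map (\<lambda>i q. q ! i) [4..<Suc (Suc (Suc (Suc k')))]"
    have g4: "prk (Suc (Suc (Suc (Suc k')))) (\<lambda>qs. (\<lambda>zs. ce g (zs ! 0) (zs ! 1) (drop 2 zs)) (map (\<lambda>gg. gg qs) ?gl))"
    proof (rule prk_comp[OF Prec.IH(2)[of "Suc (Suc k')"]])
      have p1: "prk (Suc (Suc (Suc (Suc k')))) (\<lambda>q. q ! 1 - 1)" by (rule prk_pred[OF prk_proj]) simp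
      then show "\<forall>gg\<in>set ?gl. prk (Suc (Suc (Suc (Suc k')))) gg" by (auto intro!: prk_proj)
    qed (simp del: upt_Suc)
    have g4': "prk (Suc (Suc (Suc (Suc k')))) (\<lambda>qs. ce g (qs ! 2) (qs ! 3) (qs ! 0 # (qs ! 1 - 1) # drop 4 qs))"
    proof (rule prk_cong[OF g4])
      fix qs :: "nat list" assume l: "length qs = Suc (Suc (Suc (Suc k')))"
      have "map (\<lambda>i. qs ! i) [4..<length qs] = drop 4 qs" by (rule map_nth_drop)
      then show "(\<lambda>zs. ce g (zs ! 0) (zs ! 1) (drop 2 zs)) (map (\<lambda>gg. gg qs) ?gl) =
          ce g (qs ! 2) (qs ! 3) (qs ! 0 # (qs ! 1 - 1) # drop 4 qs)"
        using l by (simp add: comp_def)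
    qed
    have hG: "prk (Suc (Suc (Suc (Suc k')))) G" unfolding G_def
      by (rule prk_if0[OF prk_proj prk_zero g4']) simp
    have H: "prk (Suc (Suc (Suc k'))) (\<lambda>zs. prrec F G (hd zs) (tl zs))"
      by (rule prk_prec[OF hF hG])
    have H2: "prk (Suc (Suc (Suc k'))) (\<lambda>xs. (\<lambda>zs. prrec F G (hd zs) (tl zs))
       (map (\<lambda>i. xs ! (if i = 0 then 2 else if i = 1 then 0 else if i = 2 then 1 else i)) [0..<Suc (Suc (Suc k'))]))"
      by (rule prk_reindex[OF H]) auto
    have "prk (Suc (Suc (Suc k'))) (\<lambda>xs. ce (Prec f g) (xs ! 0) (xs ! 1) (drop 2 xs))"
    proof (rule prk_cong[OF H2])
      fix xs :: "nat list" assume l: "length xs = Suc (Suc (Suc k'))"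
      then obtain s c n ys where xs: "xs = s # c # n # ys" by (auto simp: length_Suc_conv)
      have "(\<lambda>zs. prrec F G (hd zs) (tl zs))
       (map (\<lambda>i. xs ! (if i = 0 then 2 else if i = 1 then 0 else if i = 2 then 1 else i)) [0..<Suc (Suc (Suc k'))])
        = prrec F G n (s # c # ys)"
        using map_idx_Prec[of xs k'] l xs by (simp add: numeral_eq_Suc)
      also have "\<dots> = pit (\<lambda>j y. ce g s c (j # y # ys)) (ce f s c ys) n"
        unfolding F_def G_def by (rule pit_prrec)
      also have "\<dots> = ce (Prec f g) (xs ! 0) (xs ! 1) (drop 2 xs)" using xs by simp
      finally show "(\<lambda>zs. prrec F G (hd zs) (tl zs))
       (map (\<lambda>i. xs ! (if i = 0 then 2 else if i = 1 then 0 else if i = 2 then 1 else i)) [0..<Suc (Suc (Suc k'))])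
        = ce (Prec f g) (xs ! 0) (xs ! 1) (drop 2 xs)" .
    qed
    then show ?thesis using Suc by simp
  qed
next
  case (Mu f)
  define V where "V = (\<lambda>qs. ce f (qs ! 2) (qs ! 3) (qs ! 0 # drop 4 qs))"
  define G where "G = (\<lambda>qs. if qs ! 1 = 0 then (if V qs = 0 then 1
            else if V qs = 1 then Suc (Suc (qs ! 0)) else 0) else qs ! 1)"
  let ?gl = "[\<lambda>q. q ! 2, \<lambda>q. q ! 3, \<lambda>q. q ! 0] @ map (\<lambda>i q. q ! i) [4..<Suc (Suc (Suc (Suc k)))]"
  have v1: "prk (Suc (Suc (Suc (Suc k)))) (\<lambda>qs. (\<lambda>zs. ce f (zs ! 0) (zs ! 1) (drop 2 zs)) (map (\<lambda>gg. gg qs) ?gl))"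
    by (rule prk_comp[OF Mu.IH[of "Suc k"]]) (auto intro!: prk_proj)
  have hV: "prk (Suc (Suc (Suc (Suc k)))) V"
  proof (rule prk_cong[OF v1])
    fix qs :: "nat list" assume l: "length qs = Suc (Suc (Suc (Suc k)))"
    have "map (\<lambda>i. qs ! i) [4..<length qs] = drop 4 qs" by (rule map_nth_drop)
    then show "(\<lambda>zs. ce f (zs ! 0) (zs ! 1) (drop 2 zs)) (map (\<lambda>gg. gg qs) ?gl) = V qs"
      using l unfolding V_def by (simp add: comp_def)
  qed
  have hG: "prk (Suc (Suc (Suc (Suc k)))) G" unfolding G_def
    by (rule prk_if0[OF prk_proj prk_if0[OF hV prk_const prk_ifeq[OF hV prk_const prk_suc[OF prk_suc[OF prk_proj]] prk_const]] prk_proj]) auto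
  have H: "prk (Suc (Suc (Suc k))) (\<lambda>zs. prrec (\<lambda>ps. 0) G (hd zs) (tl zs))"
    by (rule prk_prec[OF prk_zero hG])
  have H2: "prk (Suc (Suc k)) (\<lambda>xs. (\<lambda>zs. prrec (\<lambda>ps. 0) G (hd zs) (tl zs))
       (map (\<lambda>i. xs ! (if i = 0 then 0 else i - 1)) [0..<Suc (Suc (Suc k))]))"
    by (rule prk_reindex[OF H]) auto
  have H3: "prk (Suc (Suc k)) (\<lambda>xs. (\<lambda>zs. prrec (\<lambda>ps. 0) G (hd zs) (tl zs))
       (map (\<lambda>i. xs ! (if i = 0 then 0 else i - 1)) [0..<Suc (Suc (Suc k))]) - 1)"
    by (rule prk_pred[OF H2])
  show ?case
  proof (rule prk_cong[OF H3])
    fix xs :: "nat list" assume l: "length xs = Suc (Suc k)"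
    then obtain s c D where xs: "xs = s # c # D" by (auto simp: length_Suc_conv)
    have "(\<lambda>zs. prrec (\<lambda>ps. 0) G (hd zs) (tl zs))
       (map (\<lambda>i. xs ! (if i = 0 then 0 else i - 1)) [0..<Suc (Suc (Suc k))]) = prrec (\<lambda>ps. 0) G s (s # c # D)"
      using map_idx_Mu[OF l] xs by simp
    also have "\<dots> = bs (\<lambda>m. ce f s c (m # D)) s" unfolding G_def V_def by (rule bs_prrec)
    finally show "(\<lambda>zs. prrec (\<lambda>ps. 0) G (hd zs) (tl zs))
       (map (\<lambda>i. xs ! (if i = 0 then 0 else i - 1)) [0..<Suc (Suc (Suc k))]) - 1 = ce (Mu f) (xs ! 0) (xs ! 1) (drop 2 xs)"
      using xs by simp
  qed
qed


definition pc :: "nat set \<Rightarrow> nat \<Rightarrow> nat" where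
  "pc X L = (\<Sum>i<L. (if i \<in> X then 2 else 1) * 3 ^ i)"

lemma pc_less: "pc X L < 3 ^ L"
proof (induction L)
  case 0 then show ?case by (simp add: pc_def)
next
  case (Suc L)
  have "pc X (Suc L) = pc X L + (if L \<in> X then 2 else 1) * 3 ^ L" by (simp add: pc_def)
  also have "\<dots> < 3 ^ L + 2 * 3 ^ L" using Suc by (auto split: if_splits)
  finally show ?case by simp
qed

lemma pc_ge: "L \<le> pc X L"
proof (induction L)
  case 0 then show ?case by (simp add: pc_def)
next
  case (Suc L)
  have "pc X (Suc L) = pc X L + (if L \<in> X then 2 else 1) * 3 ^ L" by (simp add: pc_def)
  moreover have "(1::nat) \<le> (if L \<in> X then 2 else 1) * 3 ^ L" by simp
  ultimately show ?case using Suc by linarith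
qed

lemma dig_add:
  assumes a: "a < 3 ^ L" and d: "d < 3"
  shows "dig (a + d * 3 ^ L) i = (if i < L then dig a i else if i = L then d else 0)"
proof -
  consider "i < L" | "i = L" | "L < i" by linarith
  then show ?thesis
  proof cases
    case 1
    have "(3::nat) ^ L = 3 ^ ((L - i - 1) + 1 + i)"
      using 1 by (intro arg_cong[where f = "\<lambda>n. (3::nat) ^ n"]) simp
    also have "\<dots> = 3 ^ (L - i - 1) * 3 * 3 ^ i" by (simp add: power_add)
    finally have e: "d * 3 ^ L = (d * 3 ^ (L - i - 1) * 3) * 3 ^ i" by simp
    have "(a + d * 3 ^ L) div 3 ^ i = a div 3 ^ i + d * 3 ^ (L - i - 1) * 3"
      unfolding e by simp
    then show ?thesis using 1 unfolding dig_def by simp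
  next
    case 2
    have "(a + d * 3 ^ L) div 3 ^ L = a div 3 ^ L + d" by simp
    then show ?thesis using 2 a d unfolding dig_def by simp
  next
    case 3
    have "d * 3 ^ L \<le> 2 * 3 ^ L" using d by simp
    then have "a + d * 3 ^ L < 3 ^ L + 2 * 3 ^ L" using a by linarith
    also have "\<dots> = 3 ^ Suc L" by simp
    also have "\<dots> \<le> 3 ^ i" using 3 by (intro power_increasing) auto
    finally show ?thesis using 3 unfolding dig_def by simp
  qed
qed

lemma dig_pc: "dig (pc X L) i = (if i < L then (if i \<in> X then 2 else 1) else 0)"
proof (induction L arbitrary: i)
  case 0 then show ?case by (simp add: pc_def dig_def)
next
  case (Suc L)
  have "pc X (Suc L) = pc X L + (if L \<in> X then 2 else 1) * 3 ^ L" by (simp add: pc_def)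
  then have "dig (pc X (Suc L)) i = (if i < L then dig (pc X L) i else if i = L then (if L \<in> X then 2 else 1) else 0)"
    using dig_add[OF pc_less[of X L], of "if L \<in> X then 2 else 1" i] by simp
  then show ?case using Suc.IH by (cases "i < L"; cases "i = L") auto
qed

lemma less_3pow: "n < (3::nat) ^ n"
  by (induction n) auto

lemma dig_big: "c \<le> i \<Longrightarrow> dig c i = 0"
proof -
  assume "c \<le> i"
  then have "c < 3 ^ i" using less_3pow[of c] power_increasing[of c i "3::nat"] by linarith
  then show ?thesis by (simp add: dig_def)
qed

lemma dig_lt3: "dig c i < 3" by (simp add: dig_def)

definition ext :: "nat \<Rightarrow> nat \<Rightarrow> bool" where
  "ext c m \<longleftrightarrow> (\<forall>i<c. dig c i \<noteq> 0 \<longrightarrow> dig m i = dig c i)"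

lemma ext_iff: "ext c m \<longleftrightarrow> (\<forall>i. dig c i \<noteq> 0 \<longrightarrow> dig m i = dig c i)"
proof
  assume "ext c m" then show "\<forall>i. dig c i \<noteq> 0 \<longrightarrow> dig m i = dig c i"
    unfolding ext_def using dig_big by (metis not_le)
qed (auto simp: ext_def)

lemma ext_refl: "ext c c" by (simp add: ext_def)

lemma ext_trans: "ext a b \<Longrightarrow> ext b c \<Longrightarrow> ext a c"
  unfolding ext_iff by (intro allI impI) (metis)

lemma agrees_ext: "ext c d \<Longrightarrow> agrees X d \<Longrightarrow> agrees X c"
  unfolding ext_iff agrees_def by (intro allI impI) (metis)

fun bfn :: "nat \<Rightarrow> nat \<Rightarrow> nat \<Rightarrow> nat" where
  "bfn c m 0 = 0"
| "bfn c m (Suc i) = (if bfn c m i = 0 then (if dig c i = 0 then 0 else if dig m i = dig c i then 0 else 1) else 1)"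

lemma bfn_iff: "bfn c m b = 0 \<longleftrightarrow> (\<forall>i<b. dig c i \<noteq> 0 \<longrightarrow> dig m i = dig c i)"
  by (induction b) (auto simp: less_Suc_eq)


lemma prk_ext: "prk k a \<Longrightarrow> prk k b \<Longrightarrow> prk k (\<lambda>xs. if ext (a xs) (b xs) then 0 else 1)"
proof -
  define G where "G = (\<lambda>ys. if ys ! 1 = 0 then (if dig (ys ! 2) (ys ! 0) = 0 then 0
          else if dig (ys ! 3) (ys ! 0) = dig (ys ! 2) (ys ! 0) then 0 else 1) else (1::nat))"
  have d20: "prk 4 (\<lambda>ys. dig (ys ! 2) (ys ! 0))" by (rule prk_dig[OF prk_proj prk_proj]) simp_all
  have d30: "prk 4 (\<lambda>ys. dig (ys ! 3) (ys ! 0))" by (rule prk_dig[OF prk_proj prk_proj]) simp_all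
  have i1: "prk 4 (\<lambda>ys. if dig (ys ! 3) (ys ! 0) = dig (ys ! 2) (ys ! 0) then 0 else 1)"
    by (rule prk_ifeq[OF d30 d20 prk_zero prk_const])
  have i2: "prk 4 (\<lambda>ys. if dig (ys ! 2) (ys ! 0) = 0 then 0
          else if dig (ys ! 3) (ys ! 0) = dig (ys ! 2) (ys ! 0) then 0 else 1)"
    by (rule prk_if0[OF d20 prk_zero i1])
  have p1: "prk 4 (\<lambda>ys. ys ! 1)" by (rule prk_proj) simp
  have hG: "prk (Suc (Suc 2)) G" unfolding G_def using prk_if0[OF p1 i2 prk_const] by (simp add: numeral_eq_Suc)
  have "prk (Suc 2) (\<lambda>xs. prrec (\<lambda>_. 0) G (hd xs) (tl xs))"
    by (rule prk_prec[OF prk_zero hG])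
  then have "prk (Suc 2) (\<lambda>xs. bfn (xs ! 1) (xs ! 2) (xs ! 0))"
  proof (rule prk_cong)
    fix xs :: "nat list" assume "length xs = Suc 2"
    then obtain b c m where xs: "xs = [b, c, m]" by (auto simp: numeral_eq_Suc length_Suc_conv)
    have "prrec (\<lambda>_. 0) G b [c, m] = bfn c m b"
    proof (induction b)
      case 0 then show ?case by simp
    next
      case (Suc b) then show ?case by (simp add: G_def)
    qed
    then show "prrec (\<lambda>_. 0) G (hd xs) (tl xs) = bfn (xs ! 1) (xs ! 2) (xs ! 0)" using xs by simp
  qed
  then have "prk 3 (\<lambda>xs. bfn (xs ! 1) (xs ! 2) (xs ! 0))" by (simp add: numeral_3_eq_3 numeral_2_eq_2)
  moreover assume "prk k a" "prk k b"
  ultimately have "prk k (\<lambda>xs. (\<lambda>ys. bfn (ys ! 1) (ys ! 2) (ys ! 0)) [a xs, a xs, b xs])"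
    by (intro prk_comp3)
  then have "prk k (\<lambda>xs. bfn (a xs) (b xs) (a xs))" by (rule prk_cong) simp
  then have "prk k (\<lambda>xs. if bfn (a xs) (b xs) (a xs) = 0 then 0 else 1)"
    by (rule prk_if0[OF _ prk_zero prk_const])
  then show ?thesis by (rule prk_cong) (simp add: bfn_iff ext_def)
qed


definition Gm :: "rf \<Rightarrow> nat \<Rightarrow> nat list \<Rightarrow> nat" where
  "Gm p c0 zs = (if ext c0 (zs ! 2) then (if ext (zs ! 2) (zs ! 0) then
      (if ce p (zs ! 0) (zs ! 0) [zs ! 1] = 0 then 1 else 0) else 1) else 0)"

definition nxt :: "rf \<Rightarrow> nat \<Rightarrow> nat \<Rightarrow> nat \<Rightarrow> nat" where
  "nxt p c0 n c = (LEAST m. Gm p c0 [m, n, c] = 0)"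

fun st :: "rf \<Rightarrow> nat \<Rightarrow> nat \<Rightarrow> nat" where
  "st p c0 0 = c0"
| "st p c0 (Suc n) = nxt p c0 n (st p c0 n)"

definition fout :: "rf \<Rightarrow> nat \<Rightarrow> nat \<Rightarrow> nat" where
  "fout p c0 n = ce p (st p c0 (Suc n)) (st p c0 (Suc n)) [n] - 1"

lemma Gm_exists:
  assumes H: "\<forall>n c. ext c0 c \<longrightarrow> (\<exists>m. ext c m \<and> ce p m m [n] \<noteq> 0)"
  shows "\<exists>m. Gm p c0 [m, n, c] = 0"
proof (cases "ext c0 c")
  case True
  then obtain m where "ext c m" "ce p m m [n] \<noteq> 0" using H by blast
  then have "Gm p c0 [m, n, c] = 0" using True by (simp add: Gm_def)
  then show ?thesis by blast
next
  case False
  then have "Gm p c0 [0, n, c] = 0" by (simp add: Gm_def)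
  then show ?thesis by blast
qed

lemma st_props:
  assumes H: "\<forall>n c. ext c0 c \<longrightarrow> (\<exists>m. ext c m \<and> ce p m m [n] \<noteq> 0)"
  shows "ext c0 (st p c0 n) \<and> ext (st p c0 n) (st p c0 (Suc n)) \<and> ce p (st p c0 (Suc n)) (st p c0 (Suc n)) [n] \<noteq> 0"
proof (induction n)
  have gen: "ext c (nxt p c0 n c) \<and> ce p (nxt p c0 n c) (nxt p c0 n c) [n] \<noteq> 0" if c: "ext c0 c" for n c
  proof -
    obtain m where "Gm p c0 [m, n, c] = 0" using Gm_exists[OF H] by blast
    then have "Gm p c0 [nxt p c0 n c, n, c] = 0" unfolding nxt_def by (rule LeastI)
    then show ?thesis using c by (simp add: Gm_def split: if_splits)
  qed
  {
    case 0
    show ?case using gen[of c0 0] ext_refl by simp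
  next
    case (Suc n)
    then have "ext c0 (st p c0 (Suc n))" using ext_trans by blast
    then show ?case using gen[of "st p c0 (Suc n)" "Suc n"] by simp
  }
qed

lemma st_mono:
  assumes H: "\<forall>n c. ext c0 c \<longrightarrow> (\<exists>m. ext c m \<and> ce p m m [n] \<noteq> 0)"
  shows "m \<le> n \<Longrightarrow> ext (st p c0 m) (st p c0 n)"
proof (induction n)
  case 0 then show ?case using ext_refl by simp
next
  case (Suc n)
  show ?case
  proof (cases "m = Suc n")
    case True then show ?thesis using ext_refl by simp
  next
    case False
    then have "ext (st p c0 m) (st p c0 n)" using Suc by simp
    then show ?thesis using st_props[OF H, of n] ext_trans by blast
  qed
qed

lemma prk_Gm: "prk 3 (Gm p c0)"
proof -
  have ce3: "prk (Suc (Suc 1)) (\<lambda>xs. ce p (xs ! 0) (xs ! 1) (drop 2 xs))" by (rule ce_prk)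
  then have ce3': "prk 3 (\<lambda>xs. ce p (xs ! 0) (xs ! 1) (drop 2 xs))" by (simp add: numeral_3_eq_3)
  have p0: "prk 3 (\<lambda>zs. zs ! 0)" and p1: "prk 3 (\<lambda>zs. zs ! 1)" and p2: "prk 3 (\<lambda>zs. zs ! 2)"
    by (auto intro: prk_proj)
  have c1: "prk 3 (\<lambda>zs. (\<lambda>xs. ce p (xs ! 0) (xs ! 1) (drop 2 xs)) [zs ! 0, zs ! 0, zs ! 1])"
    by (rule prk_comp3[OF ce3' p0 p0 p1])
  then have c2: "prk 3 (\<lambda>zs. ce p (zs ! 0) (zs ! 0) [zs ! 1])" by (rule prk_cong) simp
  have i1: "prk 3 (\<lambda>zs. if ce p (zs ! 0) (zs ! 0) [zs ! 1] = 0 then 1 else 0)"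
    by (rule prk_if0[OF c2 prk_const prk_zero])
  have e1: "prk 3 (\<lambda>zs. if ext (zs ! 2) (zs ! 0) then 0 else 1)" by (rule prk_ext[OF p2 p0])
  have i2: "prk 3 (\<lambda>zs. if (if ext (zs ! 2) (zs ! 0) then 0 else 1) = (0::nat) then
      (if ce p (zs ! 0) (zs ! 0) [zs ! 1] = 0 then 1 else 0) else 1)"
    by (rule prk_if0[OF e1 i1 prk_const])
  have e2: "prk 3 (\<lambda>zs. if ext c0 (zs ! 2) then 0 else 1)" by (rule prk_ext[OF prk_const p2])
  have i3: "prk 3 (\<lambda>zs. if (if ext c0 (zs ! 2) then 0 else 1) = (0::nat) then
      (if (if ext (zs ! 2) (zs ! 0) then 0 else 1) = (0::nat) then
      (if ce p (zs ! 0) (zs ! 0) [zs ! 1] = 0 then 1 else 0) else 1) else 0)"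
    by (rule prk_if0[OF e2 i2 prk_zero])
  then show ?thesis by (rule prk_cong) (simp add: Gm_def)
qed

lemma fout_computable:
  assumes H: "\<forall>n c. ext c0 c \<longrightarrow> (\<exists>m. ext c m \<and> ce p m m [n] \<noteq> 0)"
  shows "computable (fout p c0)"
proof -
  have "prk 2 (\<lambda>xs. LEAST m. Gm p c0 (m # xs) = 0)"
  proof (rule prk_mu)
    show "prk (Suc 2) (Gm p c0)" using prk_Gm by (simp add: numeral_3_eq_3 numeral_2_eq_2)
    show "\<forall>xs. length xs = 2 \<longrightarrow> (\<exists>m. Gm p c0 (m # xs) = 0)"
    proof (intro allI impI)
      fix xs :: "nat list" assume "length xs = 2"
      then obtain n c where "xs = [n, c]" by (auto simp: numeral_2_eq_2 length_Suc_conv)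
      then show "\<exists>m. Gm p c0 (m # xs) = 0" using Gm_exists[OF H] by simp
    qed
  qed
  then have hn: "prk 2 (\<lambda>xs. nxt p c0 (xs ! 0) (xs ! 1))"
  proof (rule prk_cong)
    fix xs :: "nat list" assume "length xs = 2"
    then obtain n c where "xs = [n, c]" by (auto simp: numeral_2_eq_2 length_Suc_conv)
    then show "(LEAST m. Gm p c0 (m # xs) = 0) = nxt p c0 (xs ! 0) (xs ! 1)" by (simp add: nxt_def)
  qed
  have "prk (Suc 0) (\<lambda>xs. prrec (\<lambda>_. c0) (\<lambda>ys. nxt p c0 (ys ! 0) (ys ! 1)) (hd xs) (tl xs))"
    by (rule prk_prec[OF prk_const]) (use hn in \<open>simp add: numeral_2_eq_2\<close>)
  then have hs0: "prk (Suc 0) (\<lambda>xs. st p c0 (xs ! 0))"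
  proof (rule prk_cong)
    fix xs :: "nat list" assume "length xs = Suc 0"
    then obtain n where xs: "xs = [n]" by (auto simp: length_Suc_conv)
    have "prrec (\<lambda>_. c0) (\<lambda>ys. nxt p c0 (ys ! 0) (ys ! 1)) n [] = st p c0 n" by (induction n) auto
    then show "prrec (\<lambda>_. c0) (\<lambda>ys. nxt p c0 (ys ! 0) (ys ! 1)) (hd xs) (tl xs) = st p c0 (xs ! 0)"
      using xs by simp
  qed
  then have hs: "prk 1 (\<lambda>xs. st p c0 (xs ! 0))" by simp
  have hs1: "prk 1 (\<lambda>xs. st p c0 (Suc (xs ! 0)))"
    using prk_comp1[OF hs prk_suc[OF prk_proj[of 0 1]]] by simp
  have ce3: "prk (Suc (Suc 1)) (\<lambda>xs. ce p (xs ! 0) (xs ! 1) (drop 2 xs))" by (rule ce_prk)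
  then have ce3': "prk 3 (\<lambda>xs. ce p (xs ! 0) (xs ! 1) (drop 2 xs))" by (simp add: numeral_3_eq_3)
  have "prk 1 (\<lambda>xs. (\<lambda>ys. ce p (ys ! 0) (ys ! 1) (drop 2 ys)) [st p c0 (Suc (xs ! 0)), st p c0 (Suc (xs ! 0)), xs ! 0])"
    by (rule prk_comp3[OF ce3' hs1 hs1 prk_proj]) simp
  then have "prk 1 (\<lambda>xs. (\<lambda>ys. ce p (ys ! 0) (ys ! 1) (drop 2 ys)) [st p c0 (Suc (xs ! 0)), st p c0 (Suc (xs ! 0)), xs ! 0] - 1)"
    by (rule prk_pred)
  then have "prk 1 (\<lambda>xs. fout p c0 (xs ! 0))" by (rule prk_cong) (simp add: fout_def)
  then obtain q where q: "\<forall>xs. length xs = 1 \<longrightarrow> eval {} q xs (fout p c0 (xs ! 0))" unfolding prk_def by blast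
  have "\<forall>n. eval {} q [n] (fout p c0 n)" using q[rule_format, of "[_]"] by simp
  then show ?thesis unfolding computable_def computable_in_def by blast
qed


definition EE :: "lang \<Rightarrow> struc \<Rightarrow> struc \<Rightarrow> rf \<Rightarrow> nat set set" where
  "EE L A B p = {X. \<exists>h. (\<forall>n. eval X p [n] (h n)) \<and> embedding L A B h}"



lemma embD1: "embedding L A B h \<Longrightarrow> h ` sdom A \<subseteq> sdom B"
  unfolding embedding_def by (elim conjE)
lemma embD2: "embedding L A B h \<Longrightarrow> inj_on h (sdom A)"
  unfolding embedding_def by (elim conjE)
lemma embD3:
  assumes "embedding L A B h" "rel_ar L i = Some k" "length xs = k" "set xs \<subseteq> sdom A"
  shows "srel A i xs \<longleftrightarrow> srel B i (map h xs)"
proof -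
  have "\<forall>i k xs. rel_ar L i = Some k \<and> length xs = k \<and> set xs \<subseteq> sdom A \<longrightarrow> (srel A i xs \<longleftrightarrow> srel B i (map h xs))"
    using assms(1) unfolding embedding_def by (elim conjE)
  then show ?thesis using assms(2-4) by blast
qed
lemma embD4:
  assumes "embedding L A B h" "fun_ar L j = Some k" "length xs = k" "set xs \<subseteq> sdom A"
  shows "h (sfun A j xs) = sfun B j (map h xs)"
proof -
  have "\<forall>j k xs. fun_ar L j = Some k \<and> length xs = k \<and> set xs \<subseteq> sdom A \<longrightarrow> h (sfun A j xs) = sfun B j (map h xs)"
    using assms(1) unfolding embedding_def by (elim conjE)
  then show ?thesis using assms(2-4) by blast
qed

lemma emb_local:
  assumes loc: "\<And>N. \<exists>h. embedding L A B h \<and> (\<forall>m\<le>N. f m = h m)"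
  shows "embedding L A B f"
  unfolding embedding_def
proof (intro conjI allI impI)
  show "f ` sdom A \<subseteq> sdom B"
  proof
    fix y assume "y \<in> f ` sdom A"
    then obtain a where a: "a \<in> sdom A" "y = f a" by auto
    obtain h where h: "embedding L A B h" "\<forall>m\<le>a. f m = h m" using loc[of a] by blast
    have "h a \<in> sdom B" using embD1[OF h(1)] a(1) by blast
    then show "y \<in> sdom B" using a h(2) by simp
  qed
next
  show "inj_on f (sdom A)"
  proof (rule inj_onI)
    fix a b assume ab: "a \<in> sdom A" "b \<in> sdom A" "f a = f b"
    obtain h where h: "embedding L A B h" "\<forall>m\<le>max a b. f m = h m" using loc[of "max a b"] by blast
    have "f a = h a" "f b = h b" using h(2) by simp_all
    then have "h a = h b" using ab by simp
    then show "a = b" using embD2[OF h(1)] ab(1,2) by (simp add: inj_on_def)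
  qed
next
  fix i k xs assume h1: "rel_ar L i = Some k \<and> length xs = k \<and> set xs \<subseteq> sdom A"
  obtain h where h: "embedding L A B h" "\<forall>m\<le>sum_list xs. f m = h m" using loc[of "sum_list xs"] by blast
  have mf: "map f xs = map h xs"
  proof (rule map_cong[OF refl])
    fix x assume "x \<in> set xs"
    then have "x \<le> sum_list xs" using member_le_sum_list[of x xs] by simp
    then show "f x = h x" using h(2) by simp
  qed
  have "srel A i xs = srel B i (map h xs)" using embD3[OF h(1)] h1 by blast
  then show "srel A i xs = srel B i (map f xs)" unfolding mf .
next
  fix j k xs assume h1: "fun_ar L j = Some k \<and> length xs = k \<and> set xs \<subseteq> sdom A"
  obtain h where h: "embedding L A B h" "\<forall>m\<le>sum_list xs + sfun A j xs. f m = h m"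
    using loc[of "sum_list xs + sfun A j xs"] by blast
  have mf: "map f xs = map h xs"
  proof (rule map_cong[OF refl])
    fix x assume "x \<in> set xs"
    then have "x \<le> sum_list xs" using member_le_sum_list[of x xs] by simp
    then show "f x = h x" using h(2) by simp
  qed
  have "f (sfun A j xs) = h (sfun A j xs)" using h(2) by simp
  also have "h (sfun A j xs) = sfun B j (map h xs)" using embD4[OF h(1)] h1 by blast
  finally show "f (sfun A j xs) = sfun B j (map f xs)" unfolding mf .
qed


lemma dense_comp:
  assumes nd: "\<not> nowhere_dense_cantor (EE L A B p)"
  shows "\<exists>h. computable h \<and> embedding L A B h"
proof -
  obtain \<sigma> where dense: "\<forall>\<tau>. cyl (\<sigma> @ \<tau>) \<inter> EE L A B p \<noteq> {}"
    using nd unfolding nowhere_dense_cantor_def by blast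
  define X\<sigma> where "X\<sigma> = {i. i < length \<sigma> \<and> \<sigma> ! i}"
  define c0 where "c0 = pc X\<sigma> (length \<sigma>)"
  have D: "\<exists>X\<in>EE L A B p. agrees X c" if ec: "ext c0 c" for c
  proof -
    define N where "N = max c (length \<sigma>)"
    define \<rho> where "\<rho> = map (\<lambda>i. dig c i = 2) [0..<N]"
    have "take (length \<sigma>) \<rho> = \<sigma>"
    proof (rule nth_equalityI)
      show "length (take (length \<sigma>) \<rho>) = length \<sigma>" by (simp add: \<rho>_def N_def)
    next
      fix i assume "i < length (take (length \<sigma>) \<rho>)"
      then have i: "i < length \<sigma>" "i < N" by (auto simp: \<rho>_def N_def)
      have d0: "dig c0 i = (if \<sigma> ! i then 2 else 1)" using i unfolding c0_def dig_pc X\<sigma>_def by simp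
      then have "dig c0 i \<noteq> 0" by simp
      then have "dig c i = dig c0 i" using ec unfolding ext_iff by blast
      then show "take (length \<sigma>) \<rho> ! i = \<sigma> ! i" using i d0 by (simp add: \<rho>_def)
    qed
    then have "\<sigma> @ drop (length \<sigma>) \<rho> = \<rho>" by (metis append_take_drop_id)
    moreover have "cyl (\<sigma> @ drop (length \<sigma>) \<rho>) \<inter> EE L A B p \<noteq> {}" using dense by blast
    ultimately have "cyl \<rho> \<inter> EE L A B p \<noteq> {}" by simp
    then obtain X where X: "X \<in> cyl \<rho>" "X \<in> EE L A B p" by blast
    have "agrees X c" unfolding agrees_def
    proof (intro allI impI)
      fix i assume nz: "dig c i \<noteq> 0"
      have "i < c"
      proof (rule ccontr)
        assume "\<not> i < c"
        then have "c \<le> i" by simp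
        then have "dig c i = 0" by (rule dig_big)
        with nz show False by simp
      qed
      then have iN: "i < N" by (simp add: N_def)
      have lr: "length \<rho> = N" by (simp add: \<rho>_def)
      have "\<forall>i<length \<rho>. (i \<in> X) = \<rho> ! i" using X(1) by (simp add: cyl_def)
      then have "(i \<in> X) = \<rho> ! i" using iN lr by simp
      moreover have "\<rho> ! i = (dig c i = 2)" using iN by (simp add: \<rho>_def)
      ultimately show "(i \<in> X) = (dig c i = 2)" by simp
    qed
    then show ?thesis using X(2) by blast
  qed
  have H: "\<forall>n c. ext c0 c \<longrightarrow> (\<exists>m. ext c m \<and> ce p m m [n] \<noteq> 0)"
  proof (intro allI impI)
    fix n c assume ec: "ext c0 c"
    obtain X where X: "X \<in> EE L A B p" "agrees X c" using D[OF ec] by blast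
    then obtain h where h: "\<forall>n. eval X p [n] (h n)" unfolding EE_def by blast
    obtain s0 L0 where g: "good X p [n] (h n) s0 L0" using ce_complete h by blast
    define L' where "L' = max (max L0 c) s0"
    define m where "m = pc X L'"
    have "s0 \<le> m" using pc_ge[of L' X] unfolding m_def L'_def by linarith
    moreover have "pre X m L0" unfolding pre_def m_def dig_pc L'_def by auto
    ultimately have "ce p m m [n] = Suc (h n)" using g unfolding good_def by blast
    moreover have "ext c m" unfolding ext_def
    proof (intro allI impI)
      fix i assume i: "i < c" "dig c i \<noteq> 0"
      have "dig m i = (if i \<in> X then 2 else 1)" using i unfolding m_def dig_pc L'_def by auto
      moreover have "(i \<in> X) = (dig c i = 2)" using X(2) i unfolding agrees_def by blast
      moreover have "dig c i < 3" by (rule dig_lt3)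
      ultimately show "dig m i = dig c i" using i by auto
    qed
    ultimately show "\<exists>m. ext c m \<and> ce p m m [n] \<noteq> 0" by auto
  qed
  have "embedding L A B (fout p c0)"
  proof (rule emb_local)
    fix N
    have "ext c0 (st p c0 (Suc N))" using st_props[OF H] by blast
    then obtain X where X: "X \<in> EE L A B p" "agrees X (st p c0 (Suc N))" using D by blast
    then obtain h where h: "\<forall>n. eval X p [n] (h n)" "embedding L A B h" unfolding EE_def by blast
    have "\<forall>m\<le>N. fout p c0 m = h m"
    proof (intro allI impI)
      fix m assume "m \<le> N"
      then have "Suc m \<le> Suc N" by simp
      then have "ext (st p c0 (Suc m)) (st p c0 (Suc N))" by (rule st_mono[OF H])
      then have ag: "agrees X (st p c0 (Suc m))" using X(2) agrees_ext by blast
      have "ce p (st p c0 (Suc m)) (st p c0 (Suc m)) [m] \<noteq> 0" using st_props[OF H] by blast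
      then have "ce p (st p c0 (Suc m)) (st p c0 (Suc m)) [m] = Suc (fout p c0 m)" unfolding fout_def by simp
      then have "eval X p [m] (fout p c0 m)" using ce_sound ag by blast
      then show "fout p c0 m = h m" using h(1) eval_det by blast
    qed
    then show "\<exists>h. embedding L A B h \<and> (\<forall>m\<le>N. fout p c0 m = h m)" using h(2) by blast
  qed
  then show ?thesis using fout_computable[OF H] by blast
qed


lemma deg_rep: "d \<in> turing_degrees \<Longrightarrow> \<exists>Z. d = turing_equiv_rel `` {Z}"
  unfolding turing_degrees_def quotient_def by blast

lemma in_deg: "(Y \<in> turing_equiv_rel `` {Z}) \<longleftrightarrow> turing_le Y Z \<and> turing_le Z Y"
  unfolding turing_equiv_rel_def by blast

theorem theorem3p2:
  assumes "computable_lang L" and "computable_struc L S"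
  shows "catspec_be L S = turing_degrees \<or> meager_cantor (\<Union> (catspec_be L S))"
proof (cases "\<forall>A. computable_struc L A \<and> bi_embeddable L A S \<longrightarrow>
    (\<exists>p. \<not> nowhere_dense_cantor (EE L A S p)) \<and> (\<exists>q. \<not> nowhere_dense_cantor (EE L S A q))")
  case True
  have "catspec_be L S = turing_degrees"
  proof
    show "catspec_be L S \<subseteq> turing_degrees" unfolding catspec_be_def by blast
    show "turing_degrees \<subseteq> catspec_be L S"
    proof
      fix d assume d: "d \<in> turing_degrees"
      then obtain Z where dZ: "d = turing_equiv_rel `` {Z}" using deg_rep by blast
      have Zd: "Z \<in> d" using dZ in_deg turing_le_refl by blast
      have "\<forall>A. computable_struc L A \<and> bi_embeddable L A S \<longrightarrow>
          (\<exists>h. deg_computable d h \<and> embedding L A S h) \<and> (\<exists>g. deg_computable d g \<and> embedding L S A g)"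
      proof (intro allI impI)
        fix A assume cA: "computable_struc L A \<and> bi_embeddable L A S"
        then obtain p q where "\<not> nowhere_dense_cantor (EE L A S p)" "\<not> nowhere_dense_cantor (EE L S A q)"
          using True by blast
        then obtain h g where hg: "computable h" "embedding L A S h" "computable g" "embedding L S A g"
          using dense_comp by metis
        have "deg_computable d h" "deg_computable d g"
          using Zd computable_rel hg unfolding deg_computable_def by blast+
        then show "(\<exists>h. deg_computable d h \<and> embedding L A S h) \<and> (\<exists>g. deg_computable d g \<and> embedding L S A g)"
          using hg by blast
      qed
      then show "d \<in> catspec_be L S" using d unfolding catspec_be_def by simp
    qed
  qed
  then show ?thesis by blast
next
  case False
  then obtain A where cA: "computable_struc L A" "bi_embeddable L A S" and
    nd: "(\<forall>p. nowhere_dense_cantor (EE L A S p)) \<or> (\<forall>q. nowhere_dense_cantor (EE L S A q))" by blast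
  have mem: "(\<exists>p. X \<in> EE L A S p) \<and> (\<exists>q. X \<in> EE L S A q)" if X: "X \<in> \<Union> (catspec_be L S)" for X
  proof -
    obtain d where d: "d \<in> catspec_be L S" "X \<in> d" using X by blast
    then have dt: "d \<in> turing_degrees" unfolding catspec_be_def by blast
    have "\<forall>A. computable_struc L A \<and> bi_embeddable L A S \<longrightarrow>
          (\<exists>h. deg_computable d h \<and> embedding L A S h) \<and> (\<exists>g. deg_computable d g \<and> embedding L S A g)"
      using d(1) unfolding catspec_be_def by simp
    then have emb: "(\<exists>h. deg_computable d h \<and> embedding L A S h) \<and> (\<exists>g. deg_computable d g \<and> embedding L S A g)"
      using cA by simp
    obtain Z where dZ: "d = turing_equiv_rel `` {Z}" using deg_rep[OF dt] by blast
    have red: "turing_le Y X" if Yd: "Y \<in> d" for Y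
    proof -
      have "turing_le Y Z" using Yd dZ in_deg by simp
      moreover have "turing_le Z X" using d(2) dZ in_deg by simp
      ultimately show ?thesis by (rule turing_le_trans)
    qed
    have comp: "\<exists>p. \<forall>n. eval X p [n] (h n)" if dc: "deg_computable d h" for h
    proof -
      obtain Y where "Y \<in> d" "computable_in Y h" using dc unfolding deg_computable_def by blast
      then have "computable_in X h" using red computable_in_trans by blast
      then show ?thesis unfolding computable_in_def by blast
    qed
    from emb obtain h g where hg: "deg_computable d h" "embedding L A S h" "deg_computable d g" "embedding L S A g"
      by blast
    obtain p where p: "\<forall>n. eval X p [n] (h n)" using comp[OF hg(1)] by blast
    obtain q where q: "\<forall>n. eval X q [n] (g n)" using comp[OF hg(3)] by blast
    have "X \<in> EE L A S p" unfolding EE_def using p hg(2) by blast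
    moreover have "X \<in> EE L S A q" unfolding EE_def using q hg(4) by blast
    ultimately show ?thesis by blast
  qed
  have "meager_cantor (\<Union> (catspec_be L S))"
    using nd
  proof
    assume a: "\<forall>p. nowhere_dense_cantor (EE L A S p)"
    have "\<Union> (catspec_be L S) \<subseteq> (\<Union>n. EE L A S (from_nat n))"
    proof
      fix X assume "X \<in> \<Union> (catspec_be L S)"
      then obtain p where "X \<in> EE L A S p" using mem by blast
      then have "X \<in> EE L A S (from_nat (to_nat p))" by simp
      then show "X \<in> (\<Union>n. EE L A S (from_nat n))" by blast
    qed
    then show ?thesis unfolding meager_cantor_def
      by (intro exI[of _ "\<lambda>n. EE L A S (from_nat n)"]) (simp add: a)
  next
    assume a: "\<forall>q. nowhere_dense_cantor (EE L S A q)"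
    have "\<Union> (catspec_be L S) \<subseteq> (\<Union>n. EE L S A (from_nat n))"
    proof
      fix X assume "X \<in> \<Union> (catspec_be L S)"
      then obtain q where "X \<in> EE L S A q" using mem by blast
      then have "X \<in> EE L S A (from_nat (to_nat q))" by simp
      then show "X \<in> (\<Union>n. EE L S A (from_nat n))" by blast
    qed
    then show ?thesis unfolding meager_cantor_def
      by (intro exI[of _ "\<lambda>n. EE L S A (from_nat n)"]) (simp add: a)
  qed
  then show ?thesis by blast
qed


end
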